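(* Let $(A,B)$ be a random vector with $\mathbb P\{A\in(0,1]\}=1$, $\mathbb P\{B>x\}\sim ax^ce^{-bx}$ as $x\to\infty$ for some $a,b>0$ and $c<-1$, $\mathbb E e^{bB}\mathbf 1_{\{A=1\}}<1$, and suppose there is a nonnegative measurable $f$ with $\mathbb P\{Ay+B>x\}\sim f(y)\mathbb P\{B>x\}$ as $x\to\infty$ for each $y\in\mathbb R$. Then, on a possibly enlarged probability space, there exists a nonnegative random variable $Z$ independent of $(A,B)$ such that $\mathbb P\{Z>x\}\sim c_Z\mathbb P\{B>x\}$ as $x\to\infty$ for some constant $c_Z>0$, and $AZ+B\le_{\rm st}Z$.
   Context: For random variables $U,V$, $U\le_{\rm st}V$ means $\mathbb P\{U>x\}\le\mathbb P\{V>x\}$ for all $x\in\mathbb R$. *)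

theory Defs
  imports "HOL-Probability.Probability" "HOL-Library.Landau_Symbols"
begin

end

theory Submission
  imports Defs "HOL-Real_Asymp.Real_Asymp"
begin


locale L62 = prob_space M for M :: "'a measure" +
  fixes A B :: "'a \<Rightarrow> real" and a b c :: real
  assumes A_meas: "A \<in> borel_measurable M" and B_meas: "B \<in> borel_measurable M"
    and A_AE: "AE \<omega> in M. 0 < A \<omega> \<and> A \<omega> \<le> 1"
    and a_pos: "a > 0" and b_pos: "b > 0" and c_lt: "c < -1"
    and tail: "(\<lambda>x. measure M {\<omega> \<in> space M. B \<omega> > x}) \<sim>[at_top] (\<lambda>x. a * x powr c * exp (- b * x))"
    and theta: "(\<integral>\<^sup>+ \<omega>. ennreal (exp (b * B \<omega>) * indicator {\<omega>. A \<omega> = 1} \<omega>) \<partial>M) < 1"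
begin

definition G :: "real \<Rightarrow> real" where "G x = measure M {\<omega> \<in> space M. B \<omega> > x}"
definition L :: "real \<Rightarrow> real" where "L x = a * x powr c * exp (- b * x)"

lemma B_set[measurable]: "{\<omega> \<in> space M. B \<omega> > x} \<in> sets M"
  using B_meas by measurable

lemma G_nonneg: "0 \<le> G x" by (simp add: G_def)
lemma G_le1: "G x \<le> 1" by (simp add: G_def)

lemma G_antimono: "x \<le> y \<Longrightarrow> G y \<le> G x"
  unfolding G_def by (rule finite_measure_mono) auto

lemma L_pos: "x > 0 \<Longrightarrow> L x > 0"
  using a_pos by (simp add: L_def)

lemma G_L: "((\<lambda>x. G x / L x) \<longlongrightarrow> 1) at_top"
proof -
  have "eventually (\<lambda>x. G x \<noteq> 0 \<or> L x \<noteq> 0) at_top"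
    using eventually_gt_at_top[of 0] by eventually_elim (use L_pos in force)
  from asymp_equivD_strong[OF tail[folded G_def L_def[abs_def]] this] show ?thesis .
qed

lemma G_bounds: "\<exists>T>0. \<forall>x\<ge>T. G x \<le> 2 * L x \<and> L x \<le> 2 * G x"
proof -
  have "eventually (\<lambda>x. dist (G x / L x) 1 < 1/2) at_top"
    using G_L by (rule tendstoD) simp
  moreover have "eventually (\<lambda>x::real. x > 0) at_top" by (rule eventually_gt_at_top)
  ultimately have "eventually (\<lambda>x. x > 0 \<and> G x \<le> 2 * L x \<and> L x \<le> 2 * G x) at_top"
  proof eventually_elim
    case (elim x)
    then have Lp: "L x > 0" using L_pos by auto
    from elim have "\<bar>G x / L x - 1\<bar> < 1/2" by (simp add: dist_real_def)
    then have "G x / L x < 3/2" "G x / L x > 1/2" by linarith+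
    with Lp show ?case using elim by (auto simp: field_simps)
  qed
  then obtain T where "\<forall>x\<ge>T. x > 0 \<and> G x \<le> 2 * L x \<and> L x \<le> 2 * G x"
    by (auto simp: eventually_at_top_linorder)
  then show ?thesis by (intro exI[of _ "max T 1"]) auto
qed

lemma G_pos: "G x > 0"
proof -
  obtain T where T: "T > 0" "\<forall>x\<ge>T. G x \<le> 2 * L x \<and> L x \<le> 2 * G x" using G_bounds by auto
  have "L (max x T) > 0" using T L_pos by auto
  moreover have "L (max x T) \<le> 2 * G (max x T)" using T(2) by auto
  ultimately have "G (max x T) > 0" by linarith
  moreover have "G (max x T) \<le> G x" by (rule G_antimono) simp
  ultimately show ?thesis by simp
qed

lemma L_tendsto: "(L \<longlongrightarrow> 0) at_top"
  unfolding L_def using b_pos c_lt by real_asymp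

lemma G_tendsto: "(G \<longlongrightarrow> 0) at_top"
proof -
  have "((\<lambda>x. (G x / L x) * L x) \<longlongrightarrow> 1 * 0) at_top"
    by (intro tendsto_mult G_L L_tendsto)
  moreover have "eventually (\<lambda>x. G x / L x * L x = G x) at_top"
    using eventually_gt_at_top[of 0] by eventually_elim (use L_pos in force)
  ultimately show ?thesis
    using Lim_transform_eventually by fastforce
qed

lemma G_cdf: "G x = 1 - cdf (distr M borel B) x"
proof -
  have "cdf (distr M borel B) x = measure M {\<omega> \<in> space M. B \<omega> \<le> x}"
    using B_meas by (simp add: cdf_def measure_distr vimage_def Int_def conj_commute)
  also have "\<dots> = 1 - G x"
    unfolding G_def by (subst prob_compl[symmetric]) (auto intro!: arg_cong[where f=prob])
  finally show ?thesis by simp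
qed

lemma G_right_cont: "continuous (at_right x) G"
proof -
  interpret R: real_distribution "distr M borel B" using B_meas by simp
  show ?thesis unfolding G_cdf[abs_def]
    by (intro continuous_intros R.cdf_is_right_cont)
qed


lemma ennreal_le_suminf: "(f :: nat \<Rightarrow> ennreal) n \<le> suminf f"
  using sum_le_suminf[OF summableI, of "{n}" f] by simp

lemma exp_integrable: "integrable M (\<lambda>\<omega>. exp (b * B \<omega>))"
proof -
  obtain T where T: "T > 0" "\<forall>x\<ge>T. G x \<le> 2 * L x \<and> L x \<le> 2 * G x" using G_bounds by auto
  define n0 :: nat where "n0 = nat \<lceil>T\<rceil>"
  have n0T: "T \<le> real n0" unfolding n0_def by linarith
  define t where "t n = (if n0 \<le> n then exp (b * (real n + 1)) else 0)" for n :: nat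
  have t_nonneg: "0 \<le> t n" for n by (simp add: t_def)
  have [measurable]: "(\<lambda>\<omega>. ennreal (t n) * indicator {\<omega> \<in> space M. B \<omega> > real n} \<omega>) \<in> borel_measurable M" for n
    by measurable
  have pw: "ennreal (exp (b * B \<omega>)) \<le> ennreal (exp (b * real n0)) + (\<Sum>n. ennreal (t n) * indicator {\<omega> \<in> space M. B \<omega> > real n} \<omega>)"
    if \<omega>: "\<omega> \<in> space M" for \<omega>
  proof (cases "B \<omega> \<le> real n0")
    case True
    then have "exp (b * B \<omega>) \<le> exp (b * real n0)" using b_pos by simp
    then show ?thesis by (simp add: add_increasing2 ennreal_leI)
  next
    case False
    define n where "n = nat \<lceil>B \<omega>\<rceil> - 1"
    have n1: "real n < B \<omega>" "B \<omega> \<le> real n + 1" "n0 \<le> n"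
      using False unfolding n_def by linarith+
    have "ennreal (exp (b * B \<omega>)) \<le> ennreal (t n) * indicator {\<omega> \<in> space M. B \<omega> > real n} \<omega>"
      using n1 \<omega> b_pos by (auto simp: t_def intro!: ennreal_leI)
    also have "\<dots> \<le> (\<Sum>n. ennreal (t n) * indicator {\<omega> \<in> space M. B \<omega> > real n} \<omega>)"
      by (rule ennreal_le_suminf)
    finally show ?thesis by (simp add: add_increasing)
  qed
  have tG: "t n * G n \<le> 2 * a * exp b * real n powr c" for n
  proof (cases "n0 \<le> n")
    case True
    then have nT: "real n \<ge> T" using n0T by linarith
    then have "G n \<le> 2 * L n" using T by auto
    then have "t n * G n \<le> exp (b * (real n + 1)) * (2 * L n)"
      using True by (simp add: t_def)
    also have "\<dots> = 2 * a * exp b * real n powr c"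
      unfolding L_def by (simp add: exp_add[symmetric] algebra_simps exp_minus_inverse)
    finally show ?thesis .
  qed (use a_pos in \<open>simp add: t_def\<close>)
  have summ: "summable (\<lambda>n. t n * G n)"
  proof (rule summable_comparison_test)
    show "\<exists>N. \<forall>n\<ge>N. norm (t n * G n) \<le> 2 * a * exp b * real n powr c"
      using tG t_nonneg G_nonneg by auto
    show "summable (\<lambda>n. 2 * a * exp b * real n powr c)"
      using summable_real_powr_iff[of c] c_lt by (intro summable_mult) simp
  qed
  have "(\<integral>\<^sup>+\<omega>. ennreal (exp (b * B \<omega>)) \<partial>M)
      \<le> (\<integral>\<^sup>+\<omega>. ennreal (exp (b * real n0)) + (\<Sum>n. ennreal (t n) * indicator {\<omega> \<in> space M. B \<omega> > real n} \<omega>) \<partial>M)"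
    by (rule nn_integral_mono) (rule pw)
  also have "\<dots> = ennreal (exp (b * real n0)) + (\<Sum>n. ennreal (t n) * emeasure M {\<omega> \<in> space M. B \<omega> > real n})"
  proof -
    have ms: "(\<lambda>\<omega>. \<Sum>n. ennreal (t n) * indicator {\<omega> \<in> space M. B \<omega> > real n} \<omega>) \<in> borel_measurable M"
      by measurable
    have "(\<integral>\<^sup>+\<omega>. ennreal (exp (b * real n0)) + (\<Sum>n. ennreal (t n) * indicator {\<omega> \<in> space M. B \<omega> > real n} \<omega>) \<partial>M)
       = (\<integral>\<^sup>+\<omega>. ennreal (exp (b * real n0)) \<partial>M) + (\<integral>\<^sup>+\<omega>. (\<Sum>n. ennreal (t n) * indicator {\<omega> \<in> space M. B \<omega> > real n} \<omega>) \<partial>M)"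
      by (rule nn_integral_add[OF _ ms]) simp
    also have "(\<integral>\<^sup>+\<omega>. (\<Sum>n. ennreal (t n) * indicator {\<omega> \<in> space M. B \<omega> > real n} \<omega>) \<partial>M)
       = (\<Sum>n. (\<integral>\<^sup>+\<omega>. ennreal (t n) * indicator {\<omega> \<in> space M. B \<omega> > real n} \<omega> \<partial>M))"
      by (rule nn_integral_suminf) measurable
    also have "\<dots> = (\<Sum>n. ennreal (t n) * emeasure M {\<omega> \<in> space M. B \<omega> > real n})"
      by (intro suminf_cong nn_integral_cmult_indicator) (rule B_set)
    finally show ?thesis by (simp add: emeasure_space_1)
  qed
  also have "\<dots> = ennreal (exp (b * real n0)) + (\<Sum>n. ennreal (t n * G n))"
  proof -
    have "ennreal (t n) * emeasure M {\<omega> \<in> space M. B \<omega> > real n} = ennreal (t n * G n)" for n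
      unfolding G_def emeasure_eq_measure using t_nonneg[of n] by (subst ennreal_mult) auto
    then show ?thesis by simp
  qed
  also have "\<dots> < \<infinity>"
  proof -
    have "(\<Sum>n. ennreal (t n * G n)) \<noteq> top"
      by (rule ennreal_suminf_neq_top[OF summ mult_nonneg_nonneg[OF t_nonneg G_nonneg]])
    then show ?thesis by (simp add: top.not_eq_extremum)
  qed
  finally show ?thesis
    by (intro integrableI_nonneg) (use B_meas in auto)
qed


lemma exp_lin_tendsto0:
  assumes "d > 0" shows "((\<lambda>x::real. exp (-(d*x) + e)) \<longlongrightarrow> 0) at_top"
proof -
  have "filterlim (\<lambda>x::real. d * x) at_top at_top"
    by (rule filterlim_tendsto_pos_mult_at_top[OF tendsto_const assms filterlim_ident])
  then have "filterlim (\<lambda>x::real. exp (d * x)) at_top at_top"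
    by (rule filterlim_compose[OF exp_at_top])
  then have "((\<lambda>x. inverse (exp (d * x))) \<longlongrightarrow> 0) at_top"
    by (rule tendsto_inverse_0_at_top)
  then have "((\<lambda>x. exp e * inverse (exp (d * x))) \<longlongrightarrow> exp e * 0) at_top"
    by (intro tendsto_mult tendsto_const)
  moreover have "exp e * inverse (exp (d * x)) = exp (-(d*x) + e)" for x
    by (simp add: exp_diff divide_inverse)
  ultimately show ?thesis by simp
qed

lemma L_div: "0 < x \<Longrightarrow> 0 < y \<Longrightarrow> L y / L x = (y / x) powr c * exp (b * (x - y))"
  unfolding L_def using a_pos
  by (simp add: powr_divide exp_diff exp_minus field_simps)

lemma G_L_comp: "filterlim u at_top at_top \<Longrightarrow> ((\<lambda>x. G (u x) / L (u x)) \<longlongrightarrow> 1) at_top"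
  using filterlim_compose[OF G_L] by blast

lemma L_G: "((\<lambda>x. L x / G x) \<longlongrightarrow> 1) at_top"
  using tendsto_inverse[OF G_L] by simp

lemma lim_shift: "((\<lambda>x. G (x - \<beta>) / G x) \<longlongrightarrow> exp (b * \<beta>)) at_top"
proof -
  have f: "filterlim (\<lambda>x::real. x - \<beta>) at_top at_top" by real_asymp
  have l2: "((\<lambda>x::real. ((x - \<beta>) / x) powr c * exp (b * \<beta>)) \<longlongrightarrow> exp (b*\<beta>)) at_top"
    by real_asymp
  have "((\<lambda>x. (G (x - \<beta>) / L (x - \<beta>)) * (((x - \<beta>) / x) powr c * exp (b * \<beta>)) * (L x / G x))
     \<longlongrightarrow> 1 * exp (b*\<beta>) * 1) at_top"
    by (intro tendsto_mult G_L_comp[OF f] l2 L_G)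
  moreover have "eventually (\<lambda>x. (G (x - \<beta>) / L (x - \<beta>)) * (((x - \<beta>) / x) powr c * exp (b * \<beta>)) * (L x / G x)
       = G (x - \<beta>) / G x) at_top"
    using eventually_gt_at_top[of "max 0 \<beta>"]
  proof eventually_elim
    case (elim x)
    then have *: "L (x - \<beta>) / L x = ((x - \<beta>) / x) powr c * exp (b * \<beta>)"
      by (subst L_div) auto
    have "L x > 0" "L (x - \<beta>) > 0" using elim L_pos by auto
    moreover have "G x > 0" using G_pos by auto
    ultimately show ?case unfolding *[symmetric] by (simp add: field_simps)
  qed
  ultimately show ?thesis using Lim_transform_eventually by fastforce
qed

lemma lim_contract:
  assumes "0 < \<alpha>" "\<alpha> < 1"
  shows "((\<lambda>x. G ((x - \<beta>) / \<alpha>) / G x) \<longlongrightarrow> 0) at_top"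
proof -
  have f: "filterlim (\<lambda>x::real. (x - \<beta>) / \<alpha>) at_top at_top" using assms by real_asymp
  have q: "((\<lambda>x::real. (x - \<beta>) / x) \<longlongrightarrow> 1) at_top" by real_asymp
  have p: "((\<lambda>x::real. ((x - \<beta>) / x / \<alpha>) powr c) \<longlongrightarrow> (1 / \<alpha>) powr c) at_top"
    using assms by (intro tendsto_powr tendsto_divide q tendsto_const) auto
  define d where "d = b * (1 / \<alpha> - 1)"
  have d: "d > 0" using assms b_pos by (simp add: d_def field_simps)
  have e: "((\<lambda>x. exp (-(d*x) + b * \<beta> / \<alpha>)) \<longlongrightarrow> 0) at_top"
    by (rule exp_lin_tendsto0[OF d])
  have "((\<lambda>x. (G ((x - \<beta>) / \<alpha>) / L ((x - \<beta>) / \<alpha>)) * (((x - \<beta>) / x / \<alpha>) powr c * exp (-(d*x) + b * \<beta> / \<alpha>)) * (L x / G x))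
     \<longlongrightarrow> 1 * ((1 / \<alpha>) powr c * 0) * 1) at_top"
    by (intro tendsto_mult G_L_comp[OF f] p e L_G)
  moreover have "eventually (\<lambda>x. (G ((x - \<beta>) / \<alpha>) / L ((x - \<beta>) / \<alpha>)) * (((x - \<beta>) / x / \<alpha>) powr c * exp (-(d*x) + b * \<beta> / \<alpha>)) * (L x / G x)
       = G ((x - \<beta>) / \<alpha>) / G x) at_top"
    using eventually_gt_at_top[of "max 0 \<beta>"]
  proof eventually_elim
    case (elim x)
    have "(x - \<beta>) / \<alpha> > 0" using elim assms by auto
    then have "L ((x - \<beta>) / \<alpha>) / L x = ((x - \<beta>) / \<alpha> / x) powr c * exp (b * (x - (x - \<beta>) / \<alpha>))"
      using elim by (subst L_div) auto
    also have "(x - \<beta>) / \<alpha> / x = (x - \<beta>) / x / \<alpha>" by simp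
    also have "b * (x - (x - \<beta>) / \<alpha>) = -(d*x) + b * \<beta> / \<alpha>"
      using assms by (simp add: d_def field_simps)
    finally have *: "L ((x - \<beta>) / \<alpha>) / L x = ((x - \<beta>) / x / \<alpha>) powr c * exp (-(d*x) + b * \<beta> / \<alpha>)" .
    have "L x > 0" "L ((x - \<beta>) / \<alpha>) > 0" using elim L_pos \<open>(x - \<beta>) / \<alpha> > 0\<close> by auto
    moreover have "G x > 0" using G_pos by auto
    ultimately show ?case unfolding *[symmetric] by (simp add: field_simps)
  qed
  ultimately show ?thesis using Lim_transform_eventually by fastforce
qed


lemma G_meas[measurable]: "G \<in> borel_measurable borel"
proof -
  have "mono (\<lambda>x. - G x)" by (auto intro!: monoI G_antimono)
  then have "(\<lambda>x. - G x) \<in> borel_measurable borel" by (rule borel_measurable_mono)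
  then have "(\<lambda>x. - (- G x)) \<in> borel_measurable borel" by measurable
  then show ?thesis by simp
qed

lemma A_meas'[measurable]: "A \<in> borel_measurable M" by (rule A_meas)
lemma B_meas'[measurable]: "B \<in> borel_measurable M" by (rule B_meas)

definition f1 :: "'a \<Rightarrow> real" where "f1 \<omega> = (if A \<omega> = 1 then exp (b * B \<omega>) else 0)"
definition \<theta> :: real where "\<theta> = integral\<^sup>L M f1"

lemma f1_meas[measurable]: "f1 \<in> borel_measurable M"
  unfolding f1_def by measurable

lemma f1_int: "integrable M f1"
  by (rule Bochner_Integration.integrable_bound[OF exp_integrable f1_meas]) (auto simp: f1_def)

lemma theta_lt1: "\<theta> < 1"
proof -
  have "(\<integral>\<^sup>+ \<omega>. ennreal (exp (b * B \<omega>) * indicator {\<omega>. A \<omega> = 1} \<omega>) \<partial>M) = (\<integral>\<^sup>+ \<omega>. ennreal (f1 \<omega>) \<partial>M)"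
    by (intro nn_integral_cong) (auto simp: f1_def indicator_def)
  also have "\<dots> = ennreal \<theta>"
    unfolding \<theta>_def by (rule nn_integral_eq_integral[OF f1_int]) (auto simp: f1_def)
  finally show ?thesis using theta by simp
qed

definition s1 :: "real \<Rightarrow> 'a \<Rightarrow> real" where
  "s1 x \<omega> = (if B \<omega> \<le> x / 2 then G ((x - B \<omega>) / A \<omega>) else 0) / G x"

lemma s1_meas[measurable]: "s1 x \<in> borel_measurable M"
  unfolding s1_def by measurable

lemma s1_lim: "((\<lambda>x. integral\<^sup>L M (s1 x)) \<longlongrightarrow> \<theta>) at_top"
  unfolding \<theta>_def
proof (rule integral_dominated_convergence_at_top[where w = "\<lambda>\<omega>. 4 * (1/2) powr c * exp (b * B \<omega>)"])
  show "f1 \<in> borel_measurable M" by measurable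
  show "s1 x \<in> borel_measurable M" for x by measurable
  show "integrable M (\<lambda>\<omega>. 4 * (1/2) powr c * exp (b * B \<omega>))"
    using exp_integrable by simp
  show "AE \<omega> in M. ((\<lambda>x. s1 x \<omega>) \<longlongrightarrow> f1 \<omega>) at_top"
    using A_AE
  proof eventually_elim
    case (elim \<omega>)
    show ?case
    proof (cases "A \<omega> = 1")
      case True
      have "eventually (\<lambda>x. G (x - B \<omega>) / G x = s1 x \<omega>) at_top"
        using eventually_ge_at_top[of "2 * B \<omega>"] by eventually_elim (auto simp: s1_def True)
      from Lim_transform_eventually[OF lim_shift this] show ?thesis by (simp add: f1_def True)
    next
      case False
      then have "A \<omega> < 1" using elim by auto
      have "eventually (\<lambda>x. G ((x - B \<omega>) / A \<omega>) / G x = s1 x \<omega>) at_top"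
        using eventually_ge_at_top[of "2 * B \<omega>"] by eventually_elim (auto simp: s1_def)
      from Lim_transform_eventually[OF lim_contract[OF _ \<open>A \<omega> < 1\<close>] this] elim
      show ?thesis by (simp add: f1_def False)
    qed
  qed
  obtain T where T: "T > 0" "\<forall>x\<ge>T. G x \<le> 2 * L x \<and> L x \<le> 2 * G x" using G_bounds by auto
  show "\<forall>\<^sub>F x in at_top. AE \<omega> in M. norm (s1 x \<omega>) \<le> 4 * (1/2) powr c * exp (b * B \<omega>)"
    using eventually_ge_at_top[of "2 * T"]
  proof eventually_elim
    case (elim x)
    then have xT: "2 * T \<le> x" by simp
    show ?case using A_AE
    proof eventually_elim
      case (elim \<omega>)
      have Gx: "G x > 0" by (rule G_pos)
      show ?case
      proof (cases "B \<omega> \<le> x / 2")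
        case False
        then show ?thesis by (simp add: s1_def)
      next
        case True
        define y where "y = x - B \<omega>"
        have yT: "y \<ge> T" "y \<ge> x / 2" using True xT T unfolding y_def by auto
        have x0: "x > 0" "y > 0" using yT T xT by auto
        have "y \<le> y / A \<omega>" using elim x0 by (simp add: field_simps)
        then have "G ((x - B \<omega>) / A \<omega>) \<le> G y" unfolding y_def by (rule G_antimono)
        also have "\<dots> \<le> 2 * L y" using T yT by auto
        finally have num: "G ((x - B \<omega>) / A \<omega>) \<le> 2 * L y" .
        have den: "L x \<le> 2 * G x" using T xT by auto
        have Lx: "L x > 0" "L y > 0" using L_pos x0 by auto
        have "s1 x \<omega> = G ((x - B \<omega>) / A \<omega>) / G x" using True by (simp add: s1_def)
        also have "\<dots> \<le> (2 * L y) / (L x / 2)"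
          using num den Gx Lx G_nonneg by (intro frac_le) auto
        also have "\<dots> = 4 * (L y / L x)" by simp
        also have "L y / L x = (y / x) powr c * exp (b * B \<omega>)"
          using x0 by (subst L_div) (auto simp: y_def)
        also have "(y / x) powr c \<le> (1/2) powr c"
          using c_lt x0 yT by (intro powr_mono2') (auto simp: field_simps)
        finally have "s1 x \<omega> \<le> 4 * ((1/2) powr c * exp (b * B \<omega>))" by simp
        moreover have "s1 x \<omega> \<ge> 0" unfolding s1_def using G_nonneg Gx by simp
        ultimately show ?thesis by simp
      qed
    qed
  qed
qed


lemma int_bounded: "f \<in> borel_measurable M \<Longrightarrow> (\<And>\<omega>. \<omega> \<in> space M \<Longrightarrow> \<bar>f \<omega>\<bar> \<le> K) \<Longrightarrow> integrable M (f :: 'a \<Rightarrow> real)"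
  by (rule integrable_const_bound[where B = K]) auto

lemma key_id: fixes aa bb u xx q cc :: real
  shows "2*(aa*u powr cc*exp(-bb*u)) * (2*(aa*(xx powr cc*q)*exp(-bb*(xx-u-1)))) = 4*(aa*u powr cc)*q*exp bb*(aa*xx powr cc*exp(-bb*xx))"
proof -
  have h: "exp(-bb*u) * exp(-bb*(xx-u-1)) = exp bb * exp(-bb*xx)"
    by (simp add: exp_add[symmetric] algebra_simps)
  have "2*(aa*u powr cc*exp(-bb*u)) * (2*(aa*(xx powr cc*q)*exp(-bb*(xx-u-1)))) = 4*aa*aa*u powr cc*xx powr cc*q*(exp(-bb*u) * exp(-bb*(xx-u-1)))"
    by (simp add: algebra_simps)
  also have "\<dots> = 4*aa*aa*u powr cc*xx powr cc*q*(exp bb * exp(-bb*xx))" by (simp only: h)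
  also have "\<dots> = 4*(aa*u powr cc)*q*exp bb*(aa*xx powr cc*exp(-bb*xx))" by (simp add: algebra_simps)
  finally show ?thesis .
qed

lemma p4: "(x::real) \<ge> 0 \<Longrightarrow> (x/4) powr cc = x powr cc * (1/4) powr cc"
  by (subst powr_mult[symmetric]) auto

lemma ind_int: "integrable M (indicator {\<omega> \<in> space M. r < B \<omega>} :: 'a \<Rightarrow> real)"
  unfolding integrable_indicator_iff by (auto simp: B_set Int_absorb2 emeasure_eq_measure)

lemma Int_sp: "{\<omega> \<in> space M. P \<omega>} \<inter> space M = {\<omega> \<in> space M. P \<omega>}" by auto

lemma R2:
  assumes "\<gamma> > 0"
  shows "\<exists>s::nat. \<exists>X. \<forall>x\<ge>X.
    integral\<^sup>L M (\<lambda>\<omega>. if x / 2 < B \<omega> \<and> B \<omega> \<le> x - real s then G (x - B \<omega>) else 0) \<le> \<gamma> * G x"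
proof -
  obtain T where T: "T > 0" "\<forall>x\<ge>T. G x \<le> 2 * L x \<and> L x \<le> 2 * G x" using G_bounds by auto
  define K0 where "K0 = 8 * a * exp b * (1/4) powr c"
  have K0: "K0 > 0" using a_pos by (simp add: K0_def)
  have summ: "summable (\<lambda>n. real n powr c)" using summable_real_powr_iff[of c] c_lt by simp
  obtain N where N: "\<forall>n\<ge>N. norm (\<Sum>i. real (i + n) powr c) < \<gamma> / K0"
    using suminf_exist_split[OF _ summ, of "\<gamma> / K0"] assms K0 by auto
  define s :: nat where "s = max N (nat \<lceil>T\<rceil> + 1)"
  have sT: "real s \<ge> T" "s \<ge> N" "real s \<ge> 1" unfolding s_def by linarith+
  have summ_s: "summable (\<lambda>k. real (k + s) powr c)"
    using summable_ignore_initial_segment[OF summ, of s] by simp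
  have tail: "(\<Sum>k. real (k + s) powr c) < \<gamma> / K0"
    using N sT by auto
  define X where "X = 2 * T + 4"
  have "\<forall>x\<ge>X. integral\<^sup>L M (\<lambda>\<omega>. if x / 2 < B \<omega> \<and> B \<omega> \<le> x - real s then G (x - B \<omega>) else 0) \<le> \<gamma> * G x"
  proof (intro allI impI)
    fix x assume xX: "x \<ge> X"
    define KK where "KK = {k \<in> {..<nat \<lceil>x\<rceil>}. real s + real k < x / 2}"
    have fin: "finite KK" unfolding KK_def by auto
    define g where "g \<omega> = (\<Sum>k\<in>KK. G (real s + real k) * indicator {\<omega> \<in> space M. B \<omega> > x - real s - real k - 1} \<omega>)" for \<omega>
    have g_meas[measurable]: "g \<in> borel_measurable M" unfolding g_def by measurable
    have pw: "(if x / 2 < B \<omega> \<and> B \<omega> \<le> x - real s then G (x - B \<omega>) else 0) \<le> g \<omega>" if \<omega>: "\<omega> \<in> space M" for \<omega>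
    proof (cases "x / 2 < B \<omega> \<and> B \<omega> \<le> x - real s")
      case True
      define k where "k = nat \<lfloor>x - B \<omega> - real s\<rfloor>"
      have k: "real s + real k \<le> x - B \<omega>" "x - B \<omega> < real s + real k + 1"
        using True unfolding k_def by linarith+
      have "real k < x" using k True sT by linarith
      then have "k < nat \<lceil>x\<rceil>" by linarith
      then have kK: "k \<in> KK" unfolding KK_def using k True sT by auto
      have "G (x - B \<omega>) \<le> G (real s + real k)" using k by (intro G_antimono) simp
      also have "\<dots> = G (real s + real k) * indicator {\<omega> \<in> space M. B \<omega> > x - real s - real k - 1} \<omega>"
        using k \<omega> by (simp add: indicator_def)
      also have "\<dots> \<le> g \<omega>" unfolding g_def
        by (rule member_le_sum[OF kK _ fin]) (auto intro!: mult_nonneg_nonneg G_nonneg)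
      finally show ?thesis using True by simp
    next
      case False
      then show ?thesis unfolding g_def by (auto intro!: sum_nonneg mult_nonneg_nonneg G_nonneg)
    qed
    have "integral\<^sup>L M (\<lambda>\<omega>. if x / 2 < B \<omega> \<and> B \<omega> \<le> x - real s then G (x - B \<omega>) else 0) \<le> integral\<^sup>L M g"
    proof (rule integral_mono[OF _ _ pw])
      show "integrable M (\<lambda>\<omega>. if x / 2 < B \<omega> \<and> B \<omega> \<le> x - real s then G (x - B \<omega>) else 0)"
        by (rule int_bounded[where K = 1]) (auto simp: G_nonneg G_le1 abs_le_iff intro: order.trans[OF _ G_le1])
      show "integrable M g"
        unfolding g_def by (intro Bochner_Integration.integrable_sum integrable_mult_right ind_int)
    qed
    also have "integral\<^sup>L M g = (\<Sum>k\<in>KK. integral\<^sup>L M (\<lambda>\<omega>. G (real s + real k) * indicator {\<omega> \<in> space M. B \<omega> > x - real s - real k - 1} \<omega>))"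
      unfolding g_def by (rule Bochner_Integration.integral_sum) (intro integrable_mult_right ind_int)
    also have "\<dots> = (\<Sum>k\<in>KK. G (real s + real k) * G (x - real s - real k - 1))"
      by (intro sum.cong refl) (simp add: G_def Int_sp)
    also have "\<dots> \<le> (\<Sum>k\<in>KK. K0 * G x * real (k + s) powr c)"
    proof (rule sum_mono)
      fix k assume kK: "k \<in> KK"
      define y where "y = x - real s - real k - 1"
      have xge: "x \<ge> 2 * T + 4" using xX by (simp add: X_def)
      have yb: "y \<ge> T" "y \<ge> x / 4" "y > 0" using kK xge T unfolding KK_def y_def by auto
      have sk: "real s + real k \<ge> T" "real s + real k > 0" using sT T by auto
      have G1: "G (real s + real k) \<le> 2 * L (real s + real k)" using T sk by auto
      have G2: "G y \<le> 2 * L y" using T yb by auto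
      have G3: "L x \<le> 2 * G x" using T xge by auto
      define u where "u = real s + real k"
      have p: "y powr c \<le> (x / 4) powr c"
        using yb c_lt xge T by (intro powr_mono2') auto
      have Ly: "L y \<le> a * (x powr c * (1/4) powr c) * exp (- b * y)"
      proof -
        have p': "y powr c \<le> x powr c * (1/4) powr c" using p p4[of x c] xge T by simp
        show ?thesis unfolding L_def using p' a_pos
          by (intro mult_right_mono mult_left_mono) auto
      qed
      have "G u * G y \<le> (2 * L u) * (2 * (a * (x powr c * (1/4) powr c) * exp (- b * y)))"
        using G1 G2 Ly G_nonneg L_pos[OF sk(2)] unfolding u_def
        by (intro mult_mono) auto
      also have "\<dots> = 4 * (a * u powr c) * (1/4) powr c * exp b * L x"
      proof -
        have yu: "y = x - u - 1" by (simp add: y_def u_def)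
        show ?thesis unfolding L_def yu by (rule key_id)
      qed
      finally have "G (real s + real k) * G y \<le> 4 * (a * (real s + real k) powr c) * (1/4) powr c * exp b * L x"
        by (simp add: u_def)
      also have "\<dots> \<le> 4 * (a * (real s + real k) powr c) * (1/4) powr c * exp b * (2 * G x)"
        using G3 a_pos by (intro mult_left_mono) auto
      also have "\<dots> = K0 * G x * real (k + s) powr c"
        by (simp add: K0_def add.commute)
      finally show "G (real s + real k) * G (x - real s - real k - 1) \<le> K0 * G x * real (k + s) powr c"
        by (simp add: y_def)
    qed
    also have "\<dots> = K0 * G x * (\<Sum>k\<in>KK. real (k + s) powr c)"
      by (simp add: sum_distrib_left)
    also have "\<dots> \<le> K0 * G x * (\<Sum>k. real (k + s) powr c)"
      using K0 G_nonneg by (intro mult_left_mono sum_le_suminf[OF summ_s fin]) auto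
    also have "\<dots> \<le> K0 * G x * (\<gamma> / K0)"
      using K0 G_nonneg tail by (intro mult_left_mono) auto
    also have "\<dots> = \<gamma> * G x" using K0 by simp
    finally show "integral\<^sup>L M (\<lambda>\<omega>. if x / 2 < B \<omega> \<and> B \<omega> \<le> x - real s then G (x - B \<omega>) else 0) \<le> \<gamma> * G x" .
  qed
  then show ?thesis by blast
qed


lemma core: "\<exists>\<epsilon>>0. \<epsilon> \<le> G 0 \<and> (\<forall>x. integral\<^sup>L M (\<lambda>\<omega>. min 1 (G ((x - B \<omega>) / A \<omega>) / \<epsilon>)) \<le> min 1 (G x / \<epsilon>))"
proof -
  define \<gamma> where "\<gamma> = (1 - \<theta>) / 4"
  have \<gamma>: "\<gamma> > 0" using theta_lt1 by (simp add: \<gamma>_def)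
  obtain s :: nat and X2 where X2: "\<forall>x\<ge>X2.
    integral\<^sup>L M (\<lambda>\<omega>. if x / 2 < B \<omega> \<and> B \<omega> \<le> x - real s then G (x - B \<omega>) else 0) \<le> \<gamma> * G x"
    using R2[OF \<gamma>] by blast
  have "eventually (\<lambda>x. integral\<^sup>L M (s1 x) < \<theta> + \<gamma>) at_top"
    using order_tendstoD(2)[OF s1_lim, of "\<theta> + \<gamma>"] \<gamma> by simp
  then obtain X1 where X1: "\<forall>x\<ge>X1. integral\<^sup>L M (s1 x) < \<theta> + \<gamma>"
    by (auto simp: eventually_at_top_linorder)
  have "eventually (\<lambda>x. G (x - real s) / G x < exp (b * real s) + 1) at_top"
    using order_tendstoD(2)[OF lim_shift[of "real s"], of "exp (b * real s) + 1"] by simp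
  then obtain X3 where X3: "\<forall>x\<ge>X3. G (x - real s) / G x < exp (b * real s) + 1"
    by (auto simp: eventually_at_top_linorder)
  define X where "X = max (max X1 X2) (max X3 0)"
  define E where "E = exp (b * real s) + 1"
  have E: "E > 0" by (simp add: E_def add_pos_pos)
  define \<epsilon> where "\<epsilon> = min (G X) (\<gamma> / E)"
  have \<epsilon>: "\<epsilon> > 0" using G_pos[of X] \<gamma> E by (simp add: \<epsilon>_def)
  have "0 \<le> X" by (simp add: X_def)
  then have "G X \<le> G 0" by (rule G_antimono)
  then have \<epsilon>G0: "\<epsilon> \<le> G 0" by (simp add: \<epsilon>_def)
  have main: "integral\<^sup>L M (\<lambda>\<omega>. min 1 (G ((x - B \<omega>) / A \<omega>) / \<epsilon>)) \<le> min 1 (G x / \<epsilon>)" for x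
  proof -
    have int_min: "integrable M (\<lambda>\<omega>. min 1 (G ((x - B \<omega>) / A \<omega>) / \<epsilon>))"
      by (rule int_bounded[where K = 1]) (use \<epsilon> G_nonneg in auto)
    show ?thesis
    proof (cases "G x \<ge> \<epsilon>")
      case True
      have "integral\<^sup>L M (\<lambda>\<omega>. min 1 (G ((x - B \<omega>) / A \<omega>) / \<epsilon>)) \<le> integral\<^sup>L M (\<lambda>\<omega>. 1)"
        by (rule integral_mono[OF int_min]) auto
      then show ?thesis using True \<epsilon> by (simp add: prob_space)
    next
      case False
      then have Gx: "G x < \<epsilon>" by simp
      have xX: "x > X"
      proof (rule ccontr)
        assume "\<not> x > X"
        then have "G X \<le> G x" by (intro G_antimono) simp
        then show False using Gx by (simp add: \<epsilon>_def)
      qed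
      define h2 where "h2 \<omega> = (if x / 2 < B \<omega> \<and> B \<omega> \<le> x - real s then G (x - B \<omega>) else 0)" for \<omega>
      have h2_meas[measurable]: "h2 \<in> borel_measurable M" unfolding h2_def by measurable
      have Gxp: "G x > 0" by (rule G_pos)
      have int_s1: "integrable M (s1 x)"
        by (rule int_bounded[where K = "1 / G x"])
           (use Gxp G_nonneg G_le1 in \<open>auto simp: s1_def divide_right_mono\<close>)
      have int_h2: "integrable M h2"
        by (rule int_bounded[where K = 1]) (use G_nonneg G_le1 in \<open>auto simp: h2_def\<close>)
      have pw: "AE \<omega> in M. min 1 (G ((x - B \<omega>) / A \<omega>) / \<epsilon>) \<le>
          (G x / \<epsilon>) * s1 x \<omega> + (1 / \<epsilon>) * h2 \<omega> + indicator {\<omega> \<in> space M. B \<omega> > x - real s} \<omega>"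
        using A_AE AE_space
      proof eventually_elim
        case (elim \<omega>)
        have s1n: "s1 x \<omega> \<ge> 0" unfolding s1_def using G_nonneg Gxp by simp
        have h2n: "h2 \<omega> \<ge> 0" unfolding h2_def using G_nonneg by simp
        have i0: "indicator {\<omega> \<in> space M. B \<omega> > x - real s} \<omega> \<ge> (0::real)" by simp
        have nn: "(G x / \<epsilon>) * s1 x \<omega> \<ge> 0" "(1 / \<epsilon>) * h2 \<omega> \<ge> 0"
          using s1n h2n \<epsilon> Gxp by auto
        consider "B \<omega> \<le> x / 2" | "x / 2 < B \<omega> \<and> B \<omega> \<le> x - real s" | "B \<omega> > x - real s" by linarith
        then show ?case
        proof cases
          case 1
          then have "(G x / \<epsilon>) * s1 x \<omega> = G ((x - B \<omega>) / A \<omega>) / \<epsilon>"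
            using Gxp by (simp add: s1_def)
          then show ?thesis using nn i0 by linarith
        next
          case 2
          then have "x - B \<omega> \<ge> 0" by simp
          then have d: "(x - B \<omega>) * A \<omega> \<le> x - B \<omega>" using elim by (simp add: mult_left_le)
          then have "x - B \<omega> \<le> (x - B \<omega>) / A \<omega>" using elim by (simp add: le_divide_eq)
          then have "G ((x - B \<omega>) / A \<omega>) \<le> G (x - B \<omega>)" by (rule G_antimono)
          then have "G ((x - B \<omega>) / A \<omega>) / \<epsilon> \<le> (1 / \<epsilon>) * h2 \<omega>"
            using 2 \<epsilon> by (simp add: h2_def divide_right_mono)
          then show ?thesis using nn i0 by linarith
        next
          case 3
          then have "indicator {\<omega> \<in> space M. B \<omega> > x - real s} \<omega> = (1::real)"
            using elim by (simp add: indicator_def)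
          then show ?thesis using nn by linarith
        qed
      qed
      have "integral\<^sup>L M (\<lambda>\<omega>. min 1 (G ((x - B \<omega>) / A \<omega>) / \<epsilon>)) \<le>
          integral\<^sup>L M (\<lambda>\<omega>. (G x / \<epsilon>) * s1 x \<omega> + (1 / \<epsilon>) * h2 \<omega> + indicator {\<omega> \<in> space M. B \<omega> > x - real s} \<omega>)"
        by (rule integral_mono_AE[OF int_min _ pw])
           (intro Bochner_Integration.integrable_add integrable_mult_right int_s1 int_h2 ind_int)
      also have "\<dots> = (G x / \<epsilon>) * integral\<^sup>L M (s1 x) + (1 / \<epsilon>) * integral\<^sup>L M h2 + G (x - real s)"
        using int_s1 int_h2 ind_int by (simp add: G_def Int_sp)
      also have "\<dots> \<le> (G x / \<epsilon>) * (\<theta> + \<gamma>) + (1 / \<epsilon>) * (\<gamma> * G x) + E * G x"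
      proof -
        have "integral\<^sup>L M (s1 x) \<le> \<theta> + \<gamma>" using X1 xX by (auto simp: X_def less_imp_le)
        then have a1: "(G x / \<epsilon>) * integral\<^sup>L M (s1 x) \<le> (G x / \<epsilon>) * (\<theta> + \<gamma>)"
          using Gxp \<epsilon> by (intro mult_left_mono) auto
        have "integral\<^sup>L M h2 \<le> \<gamma> * G x" using X2 xX unfolding h2_def by (auto simp: X_def)
        then have a2: "(1 / \<epsilon>) * integral\<^sup>L M h2 \<le> (1 / \<epsilon>) * (\<gamma> * G x)"
          using \<epsilon> by (intro mult_left_mono) auto
        have "G (x - real s) / G x < E" using X3 xX by (auto simp: X_def E_def)
        then have a3: "G (x - real s) \<le> E * G x" using Gxp by (simp add: field_simps)
        show ?thesis using a1 a2 a3 by linarith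
      qed
      also have "E * G x \<le> (\<gamma> / \<epsilon>) * G x"
      proof -
        have "\<epsilon> \<le> \<gamma> / E" by (simp add: \<epsilon>_def)
        then have "E \<le> \<gamma> / \<epsilon>" using E \<epsilon> by (simp add: field_simps)
        then show ?thesis using Gxp by (intro mult_right_mono) auto
      qed
      also have "(G x / \<epsilon>) * (\<theta> + \<gamma>) + (1 / \<epsilon>) * (\<gamma> * G x) + (\<gamma> / \<epsilon>) * G x = (G x / \<epsilon>) * (\<theta> + 3 * \<gamma>)"
        using \<epsilon> by (simp add: field_simps)
      also have "\<dots> \<le> (G x / \<epsilon>) * 1"
        using Gxp \<epsilon> theta_lt1 by (intro mult_left_mono) (auto simp: \<gamma>_def field_simps)
      also have "\<dots> = min 1 (G x / \<epsilon>)" using Gx \<epsilon> by simp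
      finally show ?thesis by simp
    qed
  qed
  show ?thesis using \<epsilon> \<epsilon>G0 main by blast
qed

end

lemma final_construct:
  fixes M :: "'a measure" and A B :: "'a \<Rightarrow> real" and a b c :: real
  assumes L: "L62 M A B a b c"
  shows "\<exists>(N :: ('a \<times> real) measure) \<pi> (Z :: 'a \<times> real \<Rightarrow> real) (cZ :: real).
           prob_space N \<and> \<pi> \<in> measurable N M \<and> distr N M \<pi> = M \<and>
           Z \<in> borel_measurable N \<and> (AE \<omega> in N. Z \<omega> \<ge> 0) \<and>
           prob_space.indep_set N
             {Z -` S \<inter> space N | S. S \<in> sets (borel :: real measure)}
             {(\<lambda>\<omega>. (A (\<pi> \<omega>), B (\<pi> \<omega>))) -` T \<inter> space N | T. T \<in> sets (borel \<Otimes>\<^sub>M borel :: (real \<times> real) measure)} \<and>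
           cZ > 0 \<and>
           (\<lambda>x::real. measure N {\<omega> \<in> space N. Z \<omega> > x})
              \<sim>[at_top] (\<lambda>x. cZ * measure M {\<omega> \<in> space M. B \<omega> > x}) \<and>
           (\<forall>x. measure N {\<omega> \<in> space N. A (\<pi> \<omega>) * Z \<omega> + B (\<pi> \<omega>) > x}
                \<le> measure N {\<omega> \<in> space N. Z \<omega> > x})"
proof -
  interpret L62 M A B a b c by (rule L)
  obtain \<epsilon> where \<epsilon>: "\<epsilon> > 0" "\<epsilon> \<le> G 0"
    and main: "\<And>x. integral\<^sup>L M (\<lambda>\<omega>. min 1 (G ((x - B \<omega>) / A \<omega>) / \<epsilon>)) \<le> min 1 (G x / \<epsilon>)"
    using core by blast
  define F where "F x = max 0 (1 - G x / \<epsilon>)" for x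
  have F_mono: "F x \<le> F y" if "x \<le> y" for x y
    using G_antimono[OF that] \<epsilon> unfolding F_def by (intro max.mono) (auto simp: divide_right_mono)
  have F_rc: "continuous (at_right x) F" for x
    unfolding F_def[abs_def] by (intro continuous_intros G_right_cont) (use \<epsilon> in auto)
  have F_bot: "(F \<longlongrightarrow> 0) at_bot"
  proof (rule tendsto_eventually)
    show "eventually (\<lambda>x. F x = 0) at_bot"
      using eventually_le_at_bot[of "0::real"]
    proof eventually_elim
      case (elim x)
      then have "G 0 \<le> G x" by (rule G_antimono)
      then have "1 \<le> G x / \<epsilon>" using \<epsilon> by (simp add: field_simps)
      then show ?case by (simp add: F_def)
    qed
  qed
  have F_top: "(F \<longlongrightarrow> 1) at_top"
  proof -
    have "((\<lambda>x. max 0 (1 - G x / \<epsilon>)) \<longlongrightarrow> max 0 (1 - 0 / \<epsilon>)) at_top"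
      by (intro tendsto_intros G_tendsto) (use \<epsilon> in auto)
    then show ?thesis by (simp add: F_def[abs_def])
  qed
  define Q where "Q = interval_measure F"
  interpret Q: real_distribution Q
    unfolding Q_def by (rule real_distribution_interval_measure[OF F_mono F_rc F_bot F_top])
  have cdfQ: "cdf Q = F" unfolding Q_def by (rule cdf_interval_measure[OF F_mono F_rc F_bot])
  have spQ[simp]: "space Q = UNIV" by (simp add: Q_def)
  have setsQ[simp]: "sets Q = sets borel" by (simp add: Q_def)
  have tailQ: "measure Q {z. x < z} = min 1 (G x / \<epsilon>)" for x
  proof -
    have "measure Q {z. x < z} = measure Q (space Q - {..x})"
      by (intro arg_cong[where f = "measure Q"]) auto
    also have "\<dots> = 1 - measure Q {..x}" by (rule Q.prob_compl) simp
    also have "measure Q {..x} = F x" using cdfQ by (simp add: cdf_def fun_eq_iff)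
    finally show ?thesis by (simp add: F_def)
  qed
  have probM: "prob_space M" by (rule prob_space_axioms)
  interpret P: pair_prob_space M Q
    by (simp add: pair_prob_space_def pair_sigma_finite_def probM Q.prob_space_axioms
        prob_space_imp_sigma_finite)
  define N where "N = M \<Otimes>\<^sub>M Q"
  have spN: "space N = space M \<times> UNIV" by (simp add: N_def space_pair_measure)
  have probN: "prob_space N" unfolding N_def by (rule P.prob_space_axioms)
  interpret N: prob_space N by (rule probN)
  have fst_meas: "fst \<in> measurable N M" unfolding N_def by simp
  have snd_meas: "snd \<in> borel_measurable N" unfolding N_def by simp
  have distr_fst: "distr N M fst = M" unfolding N_def by (rule Q.distr_pair_fst)
  have prodmeas: "measure N (U \<times> S) = measure M U * measure Q S" if "U \<in> sets M" "S \<in> sets borel" for U S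
  proof -
    have "emeasure N (U \<times> S) = emeasure M U * emeasure Q S"
      unfolding N_def using that by (intro Q.emeasure_pair_measure_Times) auto
    then show ?thesis
      by (simp add: emeasure_eq_measure Q.emeasure_eq_measure N.emeasure_eq_measure ennreal_mult[symmetric])
  qed
  have AE0: "AE \<omega> in N. snd \<omega> \<ge> 0"
  proof -
    have "measure Q {..<0} \<le> measure Q {..0}" by (intro Q.finite_measure_mono) auto
    also have "measure Q {..0} = F 0" using cdfQ by (simp add: cdf_def fun_eq_iff)
    also have "F 0 = 0" using \<epsilon> by (simp add: F_def field_simps)
    finally have Q0: "measure Q {..<0} = 0" using measure_nonneg[of Q "{..<0}"] by linarith
    have "{\<omega> \<in> space N. \<not> snd \<omega> \<ge> 0} = space M \<times> {..<0}" by (auto simp: spN)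
    moreover have "measure N (space M \<times> {..<0}) = 0" using prodmeas[of "space M" "{..<0}"] Q0 by simp
    moreover have "space M \<times> {..<0} \<in> sets N" unfolding N_def by auto
    ultimately show ?thesis
      by (subst AE_iff_measurable[where N = "space M \<times> {..<0}"]) (auto simp: N.emeasure_eq_measure)
  qed
  have tailN: "measure N {\<omega> \<in> space N. snd \<omega> > x} = min 1 (G x / \<epsilon>)" for x
  proof -
    have "{\<omega> \<in> space N. snd \<omega> > x} = space M \<times> {z. x < z}" by (auto simp: spN)
    then show ?thesis using prodmeas[of "space M" "{z. x < z}"] tailQ by (simp add: prob_space)
  qed
  have asym: "(\<lambda>x::real. measure N {\<omega> \<in> space N. snd \<omega> > x}) \<sim>[at_top] (\<lambda>x. (1/\<epsilon>) * measure M {\<omega> \<in> space M. B \<omega> > x})"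
  proof (rule asymp_equiv_refl_ev)
    have "eventually (\<lambda>x. G x < \<epsilon>) at_top"
      using order_tendstoD(2)[OF G_tendsto \<epsilon>(1)] .
    then show "eventually (\<lambda>x. measure N {\<omega> \<in> space N. snd \<omega> > x} = (1/\<epsilon>) * measure M {\<omega> \<in> space M. B \<omega> > x}) at_top"
    proof eventually_elim
      case (elim x)
      then show ?case using \<epsilon> by (simp add: tailN G_def[symmetric])
    qed
  qed
  have ineq: "measure N {\<omega> \<in> space N. A (fst \<omega>) * snd \<omega> + B (fst \<omega>) > x} \<le> measure N {\<omega> \<in> space N. snd \<omega> > x}" for x
  proof -
    define S where "S = {\<omega> \<in> space N. A (fst \<omega>) * snd \<omega> + B (fst \<omega>) > x}"
    have S_sets: "S \<in> sets (M \<Otimes>\<^sub>M Q)" unfolding S_def N_def by measurable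
    define h where "h \<omega> = min 1 (G ((x - B \<omega>) / A \<omega>) / \<epsilon>)" for \<omega>
    have h_meas: "h \<in> borel_measurable M" unfolding h_def by measurable
    have h_int: "integrable M h"
      by (rule int_bounded[where K = 1]) (use \<epsilon> G_nonneg h_meas in \<open>auto simp: h_def\<close>)
    have "emeasure N S = (\<integral>\<^sup>+\<omega>. emeasure Q (Pair \<omega> -` S) \<partial>M)"
      unfolding N_def by (rule Q.emeasure_pair_measure_alt[OF S_sets])
    also have "\<dots> = (\<integral>\<^sup>+\<omega>. ennreal (h \<omega>) \<partial>M)"
    proof (rule nn_integral_cong_AE)
      show "AE \<omega> in M. emeasure Q (Pair \<omega> -` S) = ennreal (h \<omega>)"
        using A_AE AE_space
      proof eventually_elim
        case (elim \<omega>)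
        have "Pair \<omega> -` S = {z. (x - B \<omega>) / A \<omega> < z}"
          using elim by (auto simp: S_def spN field_simps)
        then show ?case using tailQ by (simp add: Q.emeasure_eq_measure h_def)
      qed
    qed
    also have "\<dots> = ennreal (integral\<^sup>L M h)"
      by (rule nn_integral_eq_integral[OF h_int]) (use \<epsilon> G_nonneg in \<open>auto simp: h_def\<close>)
    moreover have "0 \<le> integral\<^sup>L M h"
      by (rule integral_nonneg_AE) (use \<epsilon> G_nonneg in \<open>auto simp: h_def\<close>)
    ultimately have "measure N S = integral\<^sup>L M h"
      by (simp add: N.emeasure_eq_measure)
    also have "\<dots> \<le> min 1 (G x / \<epsilon>)" unfolding h_def by (rule main)
    also have "\<dots> = measure N {\<omega> \<in> space N. snd \<omega> > x}" by (rule tailN[symmetric])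
    finally show ?thesis unfolding S_def .
  qed
  have indep: "N.indep_set
             {snd -` S \<inter> space N | S. S \<in> sets (borel :: real measure)}
             {(\<lambda>\<omega>. (A (fst \<omega>), B (fst \<omega>))) -` T \<inter> space N | T. T \<in> sets (borel \<Otimes>\<^sub>M borel :: (real \<times> real) measure)}"
  proof (subst N.indep_sets2_eq, intro conjI ballI)
    show "{snd -` S \<inter> space N | S. S \<in> sets (borel :: real measure)} \<subseteq> N.events"
      using snd_meas by (auto simp: measurable_def)
    have ABm: "(\<lambda>\<omega>. (A (fst \<omega>), B (fst \<omega>))) \<in> measurable N (borel \<Otimes>\<^sub>M borel)"
      using fst_meas by measurable
    show "{(\<lambda>\<omega>. (A (fst \<omega>), B (fst \<omega>))) -` T \<inter> space N | T. T \<in> sets (borel \<Otimes>\<^sub>M borel :: (real \<times> real) measure)} \<subseteq> N.events"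
      using ABm by (auto simp: measurable_def)
    fix E1 E2
    assume "E1 \<in> {snd -` S \<inter> space N | S. S \<in> sets (borel :: real measure)}"
    then obtain S where S: "S \<in> sets borel" "E1 = snd -` S \<inter> space N" by auto
    assume "E2 \<in> {(\<lambda>\<omega>. (A (fst \<omega>), B (fst \<omega>))) -` T \<inter> space N | T. T \<in> sets (borel \<Otimes>\<^sub>M borel :: (real \<times> real) measure)}"
    then obtain T where T: "T \<in> sets (borel \<Otimes>\<^sub>M borel)" "E2 = (\<lambda>\<omega>. (A (fst \<omega>), B (fst \<omega>))) -` T \<inter> space N" by auto
    define U where "U = (\<lambda>\<omega>. (A \<omega>, B \<omega>)) -` T \<inter> space M"
    have ABm': "(\<lambda>\<omega>. (A \<omega>, B \<omega>)) \<in> measurable M (borel \<Otimes>\<^sub>M borel)" by measurable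
    have U: "U \<in> sets M" unfolding U_def using ABm' T(1) by (auto simp: measurable_def)
    have E1: "E1 = space M \<times> S" using S by (auto simp: spN)
    have E2: "E2 = U \<times> UNIV" using T by (auto simp: spN U_def)
    have E12: "E1 \<inter> E2 = U \<times> S" using E1 E2 U sets.sets_into_space[OF U] by auto
    show "N.prob (E1 \<inter> E2) = N.prob E1 * N.prob E2"
    proof -
      have 1: "N.prob (E1 \<inter> E2) = prob U * Q.prob S" using E12 prodmeas[OF U S(1)] by simp
      have 2: "N.prob E1 = Q.prob S" using E1 prodmeas[of "space M" S] S(1) by (simp add: prob_space)
      have 3: "N.prob E2 = prob U" using E2 prodmeas[OF U, of UNIV] Q.prob_space by simp
      show ?thesis using 1 2 3 by simp
    qed
  qed
  show ?thesis
    apply (rule exI[of _ N], rule exI[of _ fst], rule exI[of _ snd], rule exI[of _ "1/\<epsilon>"])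
    using probN fst_meas distr_fst snd_meas AE0 indep \<epsilon> asym ineq by auto
qed


theorem lemma6p2:
  fixes M :: "'a measure" and A B :: "'a \<Rightarrow> real"
    and a b c :: real and f :: "real \<Rightarrow> real"
  assumes "prob_space M"
    and "A \<in> borel_measurable M" and "B \<in> borel_measurable M"
    and "AE \<omega> in M. 0 < A \<omega> \<and> A \<omega> \<le> 1"
    and "a > 0" and "b > 0" and "c < -1"
    and "(\<lambda>x. measure M {\<omega> \<in> space M. B \<omega> > x}) \<sim>[at_top] (\<lambda>x. a * x powr c * exp (- b * x))"
    and "(\<integral>\<^sup>+ \<omega>. ennreal (exp (b * B \<omega>) * indicator {\<omega>. A \<omega> = 1} \<omega>) \<partial>M) < 1"
    and "f \<in> borel_measurable borel" and "\<And>y. f y \<ge> 0"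
    and "\<And>y. (\<lambda>x. measure M {\<omega> \<in> space M. A \<omega> * y + B \<omega> > x})
               \<sim>[at_top] (\<lambda>x. f y * measure M {\<omega> \<in> space M. B \<omega> > x})"
  shows "\<exists>(N :: ('a \<times> real) measure) \<pi> (Z :: 'a \<times> real \<Rightarrow> real) (cZ :: real).
           prob_space N \<and> \<pi> \<in> measurable N M \<and> distr N M \<pi> = M \<and>
           Z \<in> borel_measurable N \<and> (AE \<omega> in N. Z \<omega> \<ge> 0) \<and>
           prob_space.indep_set N
             {Z -` S \<inter> space N | S. S \<in> sets (borel :: real measure)}
             {(\<lambda>\<omega>. (A (\<pi> \<omega>), B (\<pi> \<omega>))) -` T \<inter> space N | T. T \<in> sets (borel \<Otimes>\<^sub>M borel :: (real \<times> real) measure)} \<and>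
           cZ > 0 \<and>
           (\<lambda>x::real. measure N {\<omega> \<in> space N. Z \<omega> > x})
              \<sim>[at_top] (\<lambda>x. cZ * measure M {\<omega> \<in> space M. B \<omega> > x}) \<and>
           (\<forall>x. measure N {\<omega> \<in> space N. A (\<pi> \<omega>) * Z \<omega> + B (\<pi> \<omega>) > x}
                \<le> measure N {\<omega> \<in> space N. Z \<omega> > x})"
  using final_construct[of M A B a b c] assms
  by (simp add: L62_def L62_axioms_def)

end
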